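(* For all feasible $\boldsymbol\lambda\ne0$ with $\boldsymbol\lambda\succeq0$, we have $M(\boldsymbol\lambda)\succ0$ and $M(\boldsymbol\lambda)\succeq\boldsymbol\lambda$. Similarly, for all feasible $\boldsymbol\lambda\ne0$ with $\boldsymbol\lambda\preceq0$, we have $M(\boldsymbol\lambda)\prec0$ and $M(\boldsymbol\lambda)\preceq\boldsymbol\lambda$.
   Context: Setting: a mixture of two Bernoullis on $\{0,1\}^D$. - The true distribution is $p^*=\pi_1^*B(\cdot\mid\boldsymbol\mu_1^* )+\pi_2^*B(\cdot\mid\boldsymbol\mu_2^* )$, where $B(\mathbf x\mid\boldsymbol\mu)=\prod_i\mu_i^{x_i}(1-\mu_i)^{1-x_i}$, $\pi_1^*\in(0,1)$ and $\pi_2^*=1-\pi_1^*$. Notation: - $\overline{\mathbf x}=\mathbb E_{p^*}[\mathbf x]$, $S_i=\overline x_i(1-\overline x_i)$ and $\boldsymbol\mu^*=(\boldsymbol\mu_1^*-\boldsymbol\mu_2^* )/2$. - For $\boldsymbol\mu_1\in[0,1]^D$, set $\mathbf b=\boldsymbol\mu_1-\overline{\mathbf x}$ and $\lambda_i=2S_i^{-1}\mu_i^*b_i$. Feasible $\boldsymbol\lambda$ are those arising from $\boldsymbol\mu_1\in[0,1]^D$. - $Z_1(\boldsymbol\lambda)=\pi_1^*\prod_i(1+\pi_2^*\lambda_i)+\pi_2^*\prod_i(1-\pi_1^*\lambda_i)$. - $B_{1i}=\prod_{j\ne i}(1+\pi_2^*\lambda_j)$, $B_{2i}=\prod_{j\ne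 i}(1-\pi_1^*\lambda_j)$, and $\Lambda_i=\mu_{1i}(1-\mu_{1i})$. The leading-order EM update of $\boldsymbol\lambda$ in the one-cluster regime ($\pi_1$ small, $\boldsymbol\mu_2=\overline{\mathbf x}$) is $$M(\boldsymbol\lambda)_i=\lambda_i+(2S_i^{-1}\mu_i^* )^2\pi_1^*\pi_2^*\frac{\Lambda_i}{Z_1(\boldsymbol\lambda)}(B_{1i}-B_{2i}).$$ $\succeq$/$\succ$ denote non-strict/strict componentwise order. Standing assumption: $4\pi_1^*\pi_2^*\mu_i^*\mu_j^*\ne0$ for all $i\ne j$. *)

theory Defs
  imports Complex_Main
begin

text \<open>Coordinates are indexed by a finite type 'n, so D = CARD('n).
  Parameters: p1 = pi_1^*, pi_2^* = 1 - p1, m1 = mu_1^*, m2 = mu_2^*.\<close>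

definition xbar :: "real \<Rightarrow> ('n \<Rightarrow> real) \<Rightarrow> ('n \<Rightarrow> real) \<Rightarrow> 'n \<Rightarrow> real" where
  "xbar p1 m1 m2 i = p1 * m1 i + (1 - p1) * m2 i"

definition Svar :: "real \<Rightarrow> ('n \<Rightarrow> real) \<Rightarrow> ('n \<Rightarrow> real) \<Rightarrow> 'n \<Rightarrow> real" where
  "Svar p1 m1 m2 i = xbar p1 m1 m2 i * (1 - xbar p1 m1 m2 i)"

definition mustar :: "('n \<Rightarrow> real) \<Rightarrow> ('n \<Rightarrow> real) \<Rightarrow> 'n \<Rightarrow> real" where
  "mustar m1 m2 i = (m1 i - m2 i) / 2"

definition lam :: "real \<Rightarrow> ('n \<Rightarrow> real) \<Rightarrow> ('n \<Rightarrow> real) \<Rightarrow> ('n \<Rightarrow> real) \<Rightarrow> 'n \<Rightarrow> real" where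
  "lam p1 m1 m2 mu1 i = 2 * inverse (Svar p1 m1 m2 i) * mustar m1 m2 i * (mu1 i - xbar p1 m1 m2 i)"

definition Z1 :: "real \<Rightarrow> ('n::finite \<Rightarrow> real) \<Rightarrow> real" where
  "Z1 p1 l = p1 * (\<Prod>i\<in>UNIV. 1 + (1 - p1) * l i) + (1 - p1) * (\<Prod>i\<in>UNIV. 1 - p1 * l i)"

definition B1 :: "real \<Rightarrow> ('n::finite \<Rightarrow> real) \<Rightarrow> 'n \<Rightarrow> real" where
  "B1 p1 l i = (\<Prod>j\<in>UNIV - {i}. 1 + (1 - p1) * l j)"

definition B2 :: "real \<Rightarrow> ('n::finite \<Rightarrow> real) \<Rightarrow> 'n \<Rightarrow> real" where
  "B2 p1 l i = (\<Prod>j\<in>UNIV - {i}. 1 - p1 * l j)"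

text \<open>Leading-order EM update M(lambda), where lambda = lam(mu1) and Lambda_i = mu1_i (1 - mu1_i).\<close>
definition Mupd :: "real \<Rightarrow> ('n::finite \<Rightarrow> real) \<Rightarrow> ('n \<Rightarrow> real) \<Rightarrow> ('n \<Rightarrow> real) \<Rightarrow> 'n \<Rightarrow> real" where
  "Mupd p1 m1 m2 mu1 i =
     (let l = lam p1 m1 m2 mu1 in
      l i + (2 * inverse (Svar p1 m1 m2 i) * mustar m1 m2 i)^2 * p1 * (1 - p1)
            * (mu1 i * (1 - mu1 i)) / Z1 p1 l * (B1 p1 l i - B2 p1 l i))"

end

theory Submission
  imports Defs
begin

lemma alg_bound:
  fixes p a c u :: real
  assumes "0 < p" "p < 1" "0 \<le> a" "a \<le> 1" "0 \<le> c" "c \<le> 1" "0 \<le> u" "u \<le> 1"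
  shows "p * (a - c) * (u - (p*a + (1-p)*c)) \<le> (p*a + (1-p)*c) * (1 - (p*a + (1-p)*c))"
    and "- ((1-p) * (a - c) * (u - (p*a + (1-p)*c))) \<le> (p*a + (1-p)*c) * (1 - (p*a + (1-p)*c))"
proof -
  define x where "x = p*a + (1-p)*c"
  have e1: "p * (a - c) = x - c" unfolding x_def by (simp add: algebra_simps)
  have e2: "(1-p) * (a - c) = a - x" unfolding x_def by (simp add: algebra_simps)
  have pa: "0 \<le> p * a" "p * a \<le> p" using assms by (simp_all add: mult_left_le)
  have pc: "0 \<le> (1-p) * c" "(1-p) * c \<le> 1-p" using assms by (simp_all add: mult_left_le)
  have x0: "0 \<le> x" "x \<le> 1" unfolding x_def using pa pc by linarith+
  have "(x - c) * (u - x) \<le> x * (1 - x)"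
  proof (cases "c \<le> x")
    case True
    have "(x - c) * (u - x) \<le> (x - c) * (1 - x)"
      by (rule mult_left_mono) (use True assms in linarith)+
    also have "\<dots> \<le> x * (1 - x)"
      by (rule mult_right_mono) (use x0 assms in linarith)+
    finally show ?thesis .
  next
    case False
    have "(x - c) * (u - x) = (c - x) * (x - u)" by (simp add: algebra_simps)
    also have "\<dots> \<le> (c - x) * x"
      by (rule mult_left_mono) (use False assms in linarith)+
    also have "\<dots> \<le> (1 - x) * x"
      by (rule mult_right_mono) (use x0 assms in linarith)+
    finally show ?thesis by (simp only: mult.commute)
  qed
  then show "p * (a - c) * (u - (p*a + (1-p)*c)) \<le> (p*a + (1-p)*c) * (1 - (p*a + (1-p)*c))"
    unfolding x_def[symmetric] e1 .
  have "- ((a - x) * (u - x)) \<le> x * (1 - x)"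
  proof (cases "x \<le> a")
    case True
    have "- ((a - x) * (u - x)) = (a - x) * (x - u)" by (simp add: algebra_simps)
    also have "\<dots> \<le> (a - x) * x"
      by (rule mult_left_mono) (use True assms in linarith)+
    also have "\<dots> \<le> (1 - x) * x"
      by (rule mult_right_mono) (use x0 assms in linarith)+
    finally show ?thesis by (simp only: mult.commute)
  next
    case False
    have "- ((a - x) * (u - x)) = (x - a) * (u - x)" by (simp add: algebra_simps)
    also have "\<dots> \<le> (x - a) * (1 - x)"
      by (rule mult_left_mono) (use False assms in linarith)+
    also have "\<dots> \<le> x * (1 - x)"
      by (rule mult_right_mono) (use x0 assms in linarith)+
    finally show ?thesis .
  qed
  then show "- ((1-p) * (a - c) * (u - (p*a + (1-p)*c))) \<le> (p*a + (1-p)*c) * (1 - (p*a + (1-p)*c))"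
    unfolding x_def[symmetric] e2 .
qed

lemma lam_aux: "2 * inverse (S::real) * ((a - c) / 2) * (u - x) = (a - c) * (u - x) / S"
proof -
  have "2 * inverse S * ((a - c) / 2) * (u - x) = (2 / 2) * ((a - c) * (u - x) * inverse S)"
    by (simp only: divide_inverse mult_ac)
  also have "\<dots> = (a - c) * (u - x) / S" by (simp add: divide_inverse)
  finally show ?thesis .
qed

lemma lam_bounds:
  fixes p1 :: real and m1 m2 mu1 :: "'n::finite \<Rightarrow> real"
  assumes p1: "0 < p1" "p1 < 1"
    and m1: "\<And>i. 0 \<le> m1 i \<and> m1 i \<le> 1"
    and m2: "\<And>i. 0 \<le> m2 i \<and> m2 i \<le> 1"
    and mu1: "\<And>i. 0 \<le> mu1 i \<and> mu1 i \<le> 1"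
  shows "p1 * lam p1 m1 m2 mu1 j \<le> 1" and "- ((1-p1) * lam p1 m1 m2 mu1 j) \<le> 1"
proof -
  define S where "S = Svar p1 m1 m2 j"
  have b1: "p1 * (m1 j - m2 j) * (mu1 j - xbar p1 m1 m2 j) \<le> S"
   and b2: "- ((1-p1) * (m1 j - m2 j) * (mu1 j - xbar p1 m1 m2 j)) \<le> S"
    unfolding S_def Svar_def xbar_def
    using alg_bound[of p1 "m1 j" "m2 j" "mu1 j"] p1 m1[of j] m2[of j] mu1[of j]
    by blast+
  have xb: "0 \<le> xbar p1 m1 m2 j" "xbar p1 m1 m2 j \<le> 1"
    using p1 m1[of j] m2[of j] unfolding xbar_def
    by (smt (verit) mult_nonneg_nonneg mult_left_le)+
  have S0: "0 \<le> S" using xb by (simp add: S_def Svar_def)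
  have L: "lam p1 m1 m2 mu1 j = (m1 j - m2 j) * (mu1 j - xbar p1 m1 m2 j) / S"
    unfolding lam_def mustar_def S_def by (rule lam_aux)
  show "p1 * lam p1 m1 m2 mu1 j \<le> 1"
  proof (cases "S = 0")
    case True then show ?thesis using L by simp
  next
    case False
    then have "S > 0" using S0 by simp
    have "p1 * lam p1 m1 m2 mu1 j = (p1 * (m1 j - m2 j) * (mu1 j - xbar p1 m1 m2 j)) / S"
      using L by simp
    then show ?thesis using b1 \<open>S > 0\<close> by (simp add: pos_divide_le_eq)
  qed
  show "- ((1-p1) * lam p1 m1 m2 mu1 j) \<le> 1"
  proof (cases "S = 0")
    case True then show ?thesis using L by simp
  next
    case False
    then have "S > 0" using S0 by simp
    have "- ((1-p1) * lam p1 m1 m2 mu1 j) = (- ((1-p1) * (m1 j - m2 j) * (mu1 j - xbar p1 m1 m2 j))) / S"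
      using L by simp
    then show ?thesis using b2 \<open>S > 0\<close>
      pos_divide_le_eq[of S "- ((1-p1) * (m1 j - m2 j) * (mu1 j - xbar p1 m1 m2 j))" 1] by simp
  qed
qed

lemma prod_gt1:
  fixes f :: "'a \<Rightarrow> real"
  assumes "finite A" "j \<in> A" "\<And>k. k \<in> A \<Longrightarrow> 1 \<le> f k" "1 < f j"
  shows "1 < prod f A"
proof -
  have P: "1 \<le> prod f (A - {j})" using assms by (intro prod_ge_1) auto
  have "prod f A = f j * prod f (A - {j})" using assms by (simp add: prod.remove)
  also have "\<dots> \<ge> f j * 1" using P assms(4) by (intro mult_left_mono) auto
  finally show ?thesis using assms(4) by linarith
qed

lemma K_pos:
  fixes p1 :: real and m1 m2 mu1 :: "'n::finite \<Rightarrow> real"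
  assumes p1: "0 < p1" "p1 < 1"
    and m1: "\<And>i. 0 \<le> m1 i \<and> m1 i \<le> 1"
    and m2: "\<And>i. 0 \<le> m2 i \<and> m2 i \<le> 1"
    and ms: "mustar m1 m2 i \<noteq> 0"
    and l0: "lam p1 m1 m2 mu1 i = 0"
    and Z: "Z > 0"
  shows "(2 * inverse (Svar p1 m1 m2 i) * mustar m1 m2 i)^2 * p1 * (1 - p1)
            * (mu1 i * (1 - mu1 i)) / Z > 0"
proof -
  define x where "x = xbar p1 m1 m2 i"
  have ne: "m1 i \<noteq> m2 i" using ms by (simp add: mustar_def)
  have pa: "0 \<le> p1 * m1 i" "0 \<le> (1-p1) * m2 i" using p1 m1[of i] m2[of i] by simp_all
  have x0: "0 < x"
  proof (rule ccontr)
    assume "\<not> 0 < x"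
    then have "p1 * m1 i = 0" "(1-p1) * m2 i = 0" using pa unfolding x_def xbar_def by linarith+
    then show False using ne p1 by simp
  qed
  have pb: "0 \<le> p1 * (1 - m1 i)" "0 \<le> (1-p1) * (1 - m2 i)" using p1 m1[of i] m2[of i] by simp_all
  have x1: "x < 1"
  proof (rule ccontr)
    assume "\<not> x < 1"
    then have "p1 * (1 - m1 i) + (1-p1) * (1 - m2 i) \<le> 0"
      unfolding x_def xbar_def by (simp add: algebra_simps)
    then have "p1 * (1 - m1 i) = 0" "(1-p1) * (1 - m2 i) = 0" using pb by linarith+
    then show False using ne p1 by simp
  qed
  have S: "Svar p1 m1 m2 i > 0" using x0 x1 by (simp add: Svar_def x_def[symmetric])
  have c: "2 * inverse (Svar p1 m1 m2 i) * mustar m1 m2 i \<noteq> 0" using S ms by simp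
  have "mu1 i - x = 0" using l0 c unfolding lam_def x_def by simp
  then have "mu1 i * (1 - mu1 i) > 0" using x0 x1 by simp
  then show ?thesis using c Z p1 by (simp add: zero_less_divide_iff)
qed

theorem mainTheorem10:
  fixes p1 :: real and m1 m2 mu1 :: "'n::finite \<Rightarrow> real"
  assumes p1: "0 < p1" "p1 < 1"
    and m1: "\<And>i. 0 \<le> m1 i \<and> m1 i \<le> 1"
    and m2: "\<And>i. 0 \<le> m2 i \<and> m2 i \<le> 1"
    and stand: "\<And>i j. i \<noteq> j \<Longrightarrow> 4 * p1 * (1 - p1) * mustar m1 m2 i * mustar m1 m2 j \<noteq> 0"
    and mu1: "\<And>i. 0 \<le> mu1 i \<and> mu1 i \<le> 1"
  shows "(lam p1 m1 m2 mu1 \<noteq> (\<lambda>i. 0) \<and> (\<forall>i. lam p1 m1 m2 mu1 i \<ge> 0) \<longrightarrow>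
            (\<forall>i. Mupd p1 m1 m2 mu1 i > 0) \<and> (\<forall>i. Mupd p1 m1 m2 mu1 i \<ge> lam p1 m1 m2 mu1 i))
       \<and> (lam p1 m1 m2 mu1 \<noteq> (\<lambda>i. 0) \<and> (\<forall>i. lam p1 m1 m2 mu1 i \<le> 0) \<longrightarrow>
            (\<forall>i. Mupd p1 m1 m2 mu1 i < 0) \<and> (\<forall>i. Mupd p1 m1 m2 mu1 i \<le> lam p1 m1 m2 mu1 i))"
proof -
  define l where "l = lam p1 m1 m2 mu1"
  define K where "K = (\<lambda>i. (2 * inverse (Svar p1 m1 m2 i) * mustar m1 m2 i)^2 * p1 * (1 - p1)
            * (mu1 i * (1 - mu1 i)) / Z1 p1 l)"
  have M: "\<And>i. Mupd p1 m1 m2 mu1 i = l i + K i * (B1 p1 l i - B2 p1 l i)"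
    unfolding Mupd_def Let_def l_def K_def by simp
  have lb1: "\<And>j. p1 * l j \<le> 1"
    unfolding l_def by (rule lam_bounds(1)[OF p1]) (use m1 m2 mu1 in auto)
  have lb2: "\<And>j. - ((1-p1) * l j) \<le> 1"
    unfolding l_def by (rule lam_bounds(2)[OF p1]) (use m1 m2 mu1 in auto)
  have Kge: "\<And>i. Z1 p1 l > 0 \<Longrightarrow> K i \<ge> 0"
    unfolding K_def using p1 mu1 by (intro divide_nonneg_pos mult_nonneg_nonneg) auto
  have Kgt: "\<And>i j. Z1 p1 l > 0 \<Longrightarrow> l i = 0 \<Longrightarrow> j \<noteq> i \<Longrightarrow> K i > 0"
  proof -
    fix i j assume Z: "Z1 p1 l > 0" and li: "l i = 0" and ji: "j \<noteq> i"
    have ms: "mustar m1 m2 i \<noteq> 0" using stand[of i j] ji by auto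
    show "K i > 0" unfolding K_def
      by (rule K_pos[OF p1]) (use m1 m2 ms li Z in \<open>auto simp: l_def\<close>)
  qed
  have pos: "(\<forall>i. Mupd p1 m1 m2 mu1 i > 0) \<and> (\<forall>i. Mupd p1 m1 m2 mu1 i \<ge> l i)"
    if nz: "l \<noteq> (\<lambda>i. 0)" and ge: "\<forall>i. l i \<ge> 0"
  proof -
    obtain j0 where j0: "l j0 \<noteq> 0" using nz by auto
    then have j0p: "l j0 > 0" using ge[rule_format, of j0] by linarith
    have f1: "\<And>j. 1 \<le> 1 + (1 - p1) * l j" using ge p1 by simp
    have f2: "\<And>j. 0 \<le> 1 - p1 * l j" "\<And>j. 1 - p1 * l j \<le> 1" using lb1 ge p1 by simp_all
    have P1: "1 \<le> (\<Prod>i\<in>UNIV. 1 + (1 - p1) * l i)" using f1 by (intro prod_ge_1) auto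
    have P2: "0 \<le> (\<Prod>i\<in>UNIV. 1 - p1 * l i)" using f2 by (intro prod_nonneg) auto
    have "p1 * 1 \<le> p1 * (\<Prod>i\<in>UNIV. 1 + (1 - p1) * l i)" using P1 p1 by (intro mult_left_mono) auto
    moreover have "0 \<le> (1 - p1) * (\<Prod>i\<in>UNIV. 1 - p1 * l i)" using P2 p1 by simp
    ultimately have Z: "Z1 p1 l > 0" unfolding Z1_def using p1 by linarith
    have B1g: "\<And>i. 1 \<le> B1 p1 l i" unfolding B1_def using f1 by (intro prod_ge_1) auto
    have B2l: "\<And>i. B2 p1 l i \<le> 1" unfolding B2_def using f2 by (intro prod_le_1) auto
    have ge2: "\<And>i. Mupd p1 m1 m2 mu1 i \<ge> l i"
    proof -
      fix i
      have "0 \<le> K i * (B1 p1 l i - B2 p1 l i)" using Kge[OF Z] B1g[of i] B2l[of i] by simp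
      then show "Mupd p1 m1 m2 mu1 i \<ge> l i" using M[of i] by linarith
    qed
    have "Mupd p1 m1 m2 mu1 i > 0" for i
    proof (cases "l i = 0")
      case False
      then show ?thesis using ge2[of i] ge[rule_format, of i] by linarith
    next
      case True
      then have ji: "j0 \<noteq> i" using j0 by auto
      have "1 < B1 p1 l i" unfolding B1_def
        using ji f1 j0p p1 by (intro prod_gt1[of _ j0]) auto
      then have "0 < K i * (B1 p1 l i - B2 p1 l i)" using Kgt[OF Z True ji] B2l[of i] by simp
      then show ?thesis using M[of i] True by linarith
    qed
    then show ?thesis using ge2 by blast
  qed
  have neg: "(\<forall>i. Mupd p1 m1 m2 mu1 i < 0) \<and> (\<forall>i. Mupd p1 m1 m2 mu1 i \<le> l i)"
    if nz: "l \<noteq> (\<lambda>i. 0)" and le: "\<forall>i. l i \<le> 0"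
  proof -
    obtain j0 where j0: "l j0 \<noteq> 0" using nz by auto
    then have j0p: "l j0 < 0" using le[rule_format, of j0] by linarith
    have f1: "\<And>j. 1 \<le> 1 - p1 * l j" using le p1 by (simp add: mult_nonneg_nonpos)
    have f2: "\<And>j. 0 \<le> 1 + (1 - p1) * l j" "\<And>j. 1 + (1 - p1) * l j \<le> 1"
    proof -
      fix j
      show "0 \<le> 1 + (1 - p1) * l j" using lb2[of j] by linarith
      have "(1 - p1) * l j \<le> 0" using le p1 by (simp add: mult_nonneg_nonpos)
      then show "1 + (1 - p1) * l j \<le> 1" by linarith
    qed
    have P1: "1 \<le> (\<Prod>i\<in>UNIV. 1 - p1 * l i)" using f1 by (intro prod_ge_1) auto
    have P2: "0 \<le> (\<Prod>i\<in>UNIV. 1 + (1 - p1) * l i)" using f2 by (intro prod_nonneg) auto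
    have "(1 - p1) * 1 \<le> (1 - p1) * (\<Prod>i\<in>UNIV. 1 - p1 * l i)" using P1 p1 by (intro mult_left_mono) auto
    moreover have "0 \<le> p1 * (\<Prod>i\<in>UNIV. 1 + (1 - p1) * l i)" using P2 p1 by simp
    ultimately have Z: "Z1 p1 l > 0" unfolding Z1_def using p1
      by (metis add_nonneg_pos diff_gt_0_iff_gt less_le_trans mult_1_right)
    have B2g: "\<And>i. 1 \<le> B2 p1 l i" unfolding B2_def using f1 by (intro prod_ge_1) auto
    have B1l: "\<And>i. B1 p1 l i \<le> 1" unfolding B1_def using f2 by (intro prod_le_1) auto
    have le2: "\<And>i. Mupd p1 m1 m2 mu1 i \<le> l i"
    proof -
      fix i
      have "K i * (B1 p1 l i - B2 p1 l i) \<le> 0" using Kge[OF Z, of i] B2g[of i] B1l[of i]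
        by (simp add: mult_nonneg_nonpos)
      then show "Mupd p1 m1 m2 mu1 i \<le> l i" using M[of i] by linarith
    qed
    have "Mupd p1 m1 m2 mu1 i < 0" for i
    proof (cases "l i = 0")
      case False
      then show ?thesis using le2[of i] le[rule_format, of i] by linarith
    next
      case True
      then have ji: "j0 \<noteq> i" using j0 by auto
      have "1 < B2 p1 l i" unfolding B2_def
        using ji f1 j0p p1 by (intro prod_gt1[of _ j0]) (auto simp: mult_pos_neg)
      then have "K i * (B1 p1 l i - B2 p1 l i) < 0" using Kgt[OF Z True ji] B1l[of i]
        by (simp add: mult_pos_neg)
      then show ?thesis using M[of i] True by linarith
    qed
    then show ?thesis using le2 by blast
  qed
  show ?thesis using pos neg unfolding l_def by blast
qed

end
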